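(* Let $G$ be a non-complete double-critical $k$-chromatic graph. For every edge $xy\in E(G)$, every $(k-2)$-colouring of $G-x-y$ with colour set $[k-2]=\{1,\dots,k-2\}$, and every non-empty sequence $j_1,j_2,\dots,j_i$ of $i$ pairwise distinct colours from $[k-2]$, there is a path of order $i+2$ starting at $x$ and ending at $y$ whose $t$-th vertex after $x$ has colour $j_t$ for all $t\in[i]$. In particular, $xy$ is contained in at least $(k-2)!/(k-2-i)!$ cycles of length $i+2$.
   Context: All graphs are finite and simple. A graph $G$ is (vertex-)critical if $\chi(G-v)<\chi(G)$ for every vertex $v\in V(G)$. A critical graph $G$ is double-critical if $\chi(G-x-y)\le\chi(G)-2$ for every edge $xy\in E(G)$. The order of a path is its number of vertices; the length of a cycle is its number of edges. *)

theory Defs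
  imports Main
begin

definition simple_graph :: "'a set \<Rightarrow> ('a \<Rightarrow> 'a \<Rightarrow> bool) \<Rightarrow> bool" where
  "simple_graph V E \<longleftrightarrow> finite V \<and> (\<forall>u v. E u v \<longrightarrow> E v u) \<and> (\<forall>v. \<not> E v v)
     \<and> (\<forall>u v. E u v \<longrightarrow> u \<in> V \<and> v \<in> V)"

definition proper_colouring :: "('a \<Rightarrow> 'a \<Rightarrow> bool) \<Rightarrow> 'a set \<Rightarrow> nat \<Rightarrow> ('a \<Rightarrow> nat) \<Rightarrow> bool" where
  "proper_colouring E S k c \<longleftrightarrow> (\<forall>v\<in>S. c v \<in> {1..k}) \<and>
     (\<forall>u\<in>S. \<forall>v\<in>S. E u v \<longrightarrow> c u \<noteq> c v)"

definition colourable :: "('a \<Rightarrow> 'a \<Rightarrow> bool) \<Rightarrow> 'a set \<Rightarrow> nat \<Rightarrow> bool" where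
  "colourable E S k \<longleftrightarrow> (\<exists>c. proper_colouring E S k c)"

definition chi :: "('a \<Rightarrow> 'a \<Rightarrow> bool) \<Rightarrow> 'a set \<Rightarrow> nat" where
  "chi E S = (LEAST k. colourable E S k)"

definition critical :: "'a set \<Rightarrow> ('a \<Rightarrow> 'a \<Rightarrow> bool) \<Rightarrow> bool" where
  "critical V E \<longleftrightarrow> (\<forall>v\<in>V. chi E (V - {v}) < chi E V)"

definition double_critical :: "'a set \<Rightarrow> ('a \<Rightarrow> 'a \<Rightarrow> bool) \<Rightarrow> bool" where
  "double_critical V E \<longleftrightarrow> critical V E \<and>
     (\<forall>x y. E x y \<longrightarrow> chi E (V - {x, y}) \<le> chi E V - 2)"

definition complete_graph :: "'a set \<Rightarrow> ('a \<Rightarrow> 'a \<Rightarrow> bool) \<Rightarrow> bool" where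
  "complete_graph V E \<longleftrightarrow> (\<forall>u\<in>V. \<forall>v\<in>V. u \<noteq> v \<longrightarrow> E u v)"

text \<open>A path, given as the list of its vertices (its order is the length of the list).\<close>
definition is_path :: "('a \<Rightarrow> 'a \<Rightarrow> bool) \<Rightarrow> 'a list \<Rightarrow> bool" where
  "is_path E p \<longleftrightarrow> p \<noteq> [] \<and> distinct p \<and> (\<forall>j. Suc j < length p \<longrightarrow> E (p ! j) (p ! Suc j))"

text \<open>A cycle of length L, regarded as a subgraph, i.e. as its set of edges
  (each edge a two-element vertex set).\<close>
definition cycle_edges :: "'a list \<Rightarrow> 'a set set" where
  "cycle_edges vs = {{vs ! j, vs ! ((Suc j) mod length vs)} | j. j < length vs}"

definition is_cycle :: "('a \<Rightarrow> 'a \<Rightarrow> bool) \<Rightarrow> nat \<Rightarrow> 'a set set \<Rightarrow> bool" where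
  "is_cycle E L C \<longleftrightarrow> (\<exists>vs. length vs = L \<and> L \<ge> 3 \<and> distinct vs \<and>
     (\<forall>j<L. E (vs ! j) (vs ! ((Suc j) mod L))) \<and> C = cycle_edges vs)"

end

theory Submission
  imports Defs
begin


fun RR :: "('a \<Rightarrow> 'a \<Rightarrow> bool) \<Rightarrow> 'a set \<Rightarrow> 'a \<Rightarrow> 'a \<Rightarrow> ('a \<Rightarrow> nat) \<Rightarrow> nat list \<Rightarrow> nat \<Rightarrow> 'a set" where
  "RR E V x y c js 0 = {v \<in> V - {x,y}. E x v \<and> c v = js ! 0}"
| "RR E V x y c js (Suc t) = {v \<in> V - {x,y}. c v = js ! Suc t \<and> (\<exists>u\<in>RR E V x y c js t. E u v)}"

lemma RR_sub: "v \<in> RR E V x y c js t \<Longrightarrow> v \<in> V - {x,y} \<and> c v = js ! t"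
  by (cases t) auto

lemma RR_walk:
  assumes "v \<in> RR E V x y c js t"
  shows "\<exists>f. f t = v \<and> (\<forall>s\<le>t. f s \<in> V - {x,y} \<and> c (f s) = js ! s) \<and> E x (f 0)
           \<and> (\<forall>s<t. E (f s) (f (Suc s)))"
  using assms
proof (induction t arbitrary: v)
  case 0
  then show ?case by (intro exI[of _ "\<lambda>_. v"]) auto
next
  case (Suc t)
  then obtain u where u: "u \<in> RR E V x y c js t" "E u v" "v \<in> V - {x,y}" "c v = js ! Suc t" by auto
  from Suc.IH[OF u(1)] obtain f where f: "f t = u" "\<forall>s\<le>t. f s \<in> V - {x,y} \<and> c (f s) = js ! s"
     "E x (f 0)" "\<forall>s<t. E (f s) (f (Suc s))" by blast
  show ?case
    apply (intro exI[of _ "f(Suc t := v)"])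
    using f u by (auto simp: le_Suc_eq less_Suc_eq)
qed

lemma path_exists:
  assumes sg: "simple_graph V E" and chi: "chi E V = k" and xy: "E x y"
    and c: "proper_colouring E (V - {x, y}) (k - 2) c" and ne: "js \<noteq> []" and dj: "distinct js"
    and sj: "set js \<subseteq> {1..k - 2}"
  shows "\<exists>p. is_path E p \<and> length p = length js + 2 \<and> hd p = x \<and> last p = y \<and>
              (\<forall>t<length js. c (p ! Suc t) = js ! t)"
proof -
  define n where "n = length js"
  have n0: "n > 0" using ne n_def by auto
  have k3: "k \<ge> 3" using ne sj by (cases js) auto
  have jsb: "\<And>t. t < n \<Longrightarrow> js ! t \<in> {1..k-2}" using sj n_def nth_mem by blast
  have jsd: "\<And>t s. t < n \<Longrightarrow> s < n \<Longrightarrow> js ! t = js ! s \<Longrightarrow> t = s"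
    using dj n_def nth_eq_iff_index_eq by blast
  have Esym: "\<And>u v. E u v \<Longrightarrow> E v u" and Eirr: "\<And>v. \<not> E v v"
    and EV: "\<And>u v. E u v \<Longrightarrow> u \<in> V \<and> v \<in> V"
    using sg unfolding simple_graph_def by blast+
  have xney: "x \<noteq> y" using xy Eirr by blast
  let ?R = "RR E V x y c js"
  show ?thesis
  proof (cases "\<exists>v\<in>?R (n-1). E v y")
    case True
    then obtain v where v: "v \<in> ?R (n-1)" "E v y" by blast
    from RR_walk[OF v(1)] obtain f where f: "f (n-1) = v" "\<forall>s\<le>n-1. f s \<in> V - {x,y} \<and> c (f s) = js ! s"
      "E x (f 0)" "\<forall>s<n-1. E (f s) (f (Suc s))" by blast
    define g where "g j = (if j = 0 then x else if j \<le> n then f (j-1) else y)" for j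
    define p where "p = map g [0..<n+2]"
    have pn: "\<And>j. j < n + 2 \<Longrightarrow> p ! j = g j" unfolding p_def by (simp del: upt_Suc)
    have lp: "length p = n + 2" unfolding p_def by simp
    have inj: "inj_on g {0..<n+2}"
    proof (rule inj_onI)
      fix a b assume a: "a \<in> {0..<n+2}" and b: "b \<in> {0..<n+2}" and e: "g a = g b"
      have fx: "\<And>j. 0 < j \<Longrightarrow> j \<le> n \<Longrightarrow> g j \<in> V - {x,y} \<and> c (g j) = js ! (j-1)"
        using f(2) unfolding g_def by auto
      have gx: "g 0 = x" and gy: "\<And>j. n < j \<Longrightarrow> g j = y" unfolding g_def by auto
      have gi: "\<And>j. 0 < j \<Longrightarrow> j \<le> n \<Longrightarrow> g j \<noteq> x \<and> g j \<noteq> y" using fx by blast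
      have an: "a < n + 2" "b < n + 2" using a b by auto
      show "a = b"
      proof (cases "a = 0")
        case True
        then show ?thesis using gx gy gi e xney an by (metis not_gr0 not_le)
      next
        case a0: False
        show ?thesis
        proof (cases "b = 0")
          case True
          then show ?thesis using gx gy gi e xney an a0 by (metis not_gr0 not_le)
        next
          case b0: False
          show ?thesis
          proof (cases "a \<le> n")
            case an1: True
            show ?thesis
            proof (cases "b \<le> n")
              case True
              have "js ! (a-1) = js ! (b-1)" using fx[of a] fx[of b] e a0 b0 an1 True by simp
              then have "a - 1 = b - 1" using jsd[of "a-1" "b-1"] an1 True a0 b0 by simp
              then show ?thesis using a0 b0 by simp
            next
              case False
              then show ?thesis using gy gi e a0 an1 by fastforce
            qed
          next
            case False
            then have "a = n + 1" using an by simp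
            moreover have "b = n + 1"
            proof (rule ccontr)
              assume "b \<noteq> n + 1"
              then have "b \<le> n" using an(2) by simp
              moreover have "g a = y" using gy False by simp
              ultimately show False using gi[of b] e b0 by simp
            qed
            ultimately show ?thesis by simp
          qed
        qed
      qed
    qed
    have "is_path E p"
      unfolding is_path_def
    proof (intro conjI allI impI)
      show "p \<noteq> []" using lp by auto
      show "distinct p" unfolding p_def using inj by (simp add: distinct_map del: upt_Suc)
      fix j assume j: "Suc j < length p"
      show "E (p ! j) (p ! Suc j)"
      proof -
        have "j = 0 \<or> (0 < j \<and> j < n) \<or> j = n" using j lp by auto
        moreover have "j = 0 \<Longrightarrow> ?thesis" using pn j lp f(3) n0 by (simp add: g_def)
        moreover have "0 < j \<and> j < n \<Longrightarrow> ?thesis"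
        proof -
          assume jj: "0 < j \<and> j < n"
          obtain m where m: "j = Suc m" using jj by (cases j) auto
          have "m < n - 1" using jj m by simp
          then have "E (f (j-1)) (f (Suc (j-1)))" using f(4) m by simp
          then show ?thesis using pn[of j] pn[of "Suc j"] jj by (simp add: g_def)
        qed
        moreover have "j = n \<Longrightarrow> ?thesis" using pn j lp f(1) v(2) n0 by (simp add: g_def)
        ultimately show ?thesis by blast
      qed
    qed
    moreover have "hd p = x" unfolding p_def by (simp add: g_def upt_rec)
    moreover have "last p = y" using lp pn[of "n+1"] by (subst last_conv_nth) (auto simp: g_def)
    moreover have "\<forall>t<length js. c (p ! Suc t) = js ! t" using pn f(2) n_def by (auto simp: g_def)
    ultimately show ?thesis using lp n_def by blast
  next
    case False
    define nc where "nc t = (if Suc t < n then js ! Suc t else k - 1)" for t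
    define c' where "c' v = (if v = x then js ! 0 else if v = y then k - 1 else
       if (\<exists>t<n. v \<in> ?R t) then nc (SOME t. t < n \<and> v \<in> ?R t) else c v)" for v
    have F2: "\<And>v t s. v \<in> ?R t \<Longrightarrow> v \<in> ?R s \<Longrightarrow> t < n \<Longrightarrow> s < n \<Longrightarrow> t = s"
      using RR_sub jsd by metis
    have cR: "\<And>v t. v \<in> ?R t \<Longrightarrow> t < n \<Longrightarrow> c' v = nc t"
    proof -
      fix v t assume a: "v \<in> ?R t" "t < n"
      then have "(SOME t. t < n \<and> v \<in> ?R t) = t" using F2 by (intro some_equality) auto
      then show "c' v = nc t" using a RR_sub[OF a(1)] by (auto simp: c'_def)
    qed
    have cN: "\<And>v. v \<in> V - {x,y} \<Longrightarrow> \<not>(\<exists>t<n. v \<in> ?R t) \<Longrightarrow> c' v = c v" by (auto simp: c'_def)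
    have cb: "\<And>v. v \<in> V - {x,y} \<Longrightarrow> c v \<in> {1..k-2}" using c unfolding proper_colouring_def by blast
    have cp: "\<And>u v. u \<in> V - {x,y} \<Longrightarrow> v \<in> V - {x,y} \<Longrightarrow> E u v \<Longrightarrow> c u \<noteq> c v"
      using c unfolding proper_colouring_def by blast
    have ncb: "\<And>t. nc t \<in> {1..k-1}"
      subgoal for t using jsb[of "Suc t"] k3 by (auto simp: nc_def) done
    have ncd: "\<And>t s. t < n \<Longrightarrow> s < n \<Longrightarrow> nc t = nc s \<Longrightarrow> t = s"
      subgoal for t s using jsd[of "Suc t" "Suc s"] jsb[of "Suc t"] jsb[of "Suc s"] k3 by (auto simp: nc_def split: if_splits) done
    have nck: "\<And>t. t < n \<Longrightarrow> nc t = k - 1 \<Longrightarrow> t = n - 1"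
      subgoal for t using jsb[of "Suc t"] k3 by (auto simp: nc_def split: if_splits) done
    have ncj0: "\<And>t. t < n \<Longrightarrow> nc t \<noteq> js ! 0"
      subgoal for t using jsd[of "Suc t" 0] jsb[of 0] n0 k3 by (auto simp: nc_def split: if_splits) done
    have ncjs: "\<And>t. Suc t < n \<Longrightarrow> nc t = js ! Suc t" by (simp add: nc_def)
    have ncj: "\<And>t. t < n \<Longrightarrow> nc t \<noteq> k - 1 \<Longrightarrow> Suc t < n" by (auto simp: nc_def split: if_splits)
    have key: "c' u \<noteq> c' v" if uv: "E u v" "u \<noteq> x" "u \<noteq> y \<or> v \<noteq> x" for u v
    proof -
      have uV: "u \<in> V" "v \<in> V" using EV uv by auto
      show ?thesis
      proof (cases "u = y")
        case True
        then have "v \<noteq> x" using uv by auto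
        moreover have "v \<noteq> y" using True uv Eirr by auto
        ultimately have vV: "v \<in> V - {x,y}" using uV by auto
        have cy: "c' u = k - 1" using True xney by (simp add: c'_def)
        show ?thesis
        proof (cases "\<exists>t<n. v \<in> ?R t")
          case True
          then obtain t where t: "t < n" "v \<in> ?R t" by blast
          have "c' v = nc t" using cR t by blast
          moreover have "nc t \<noteq> k - 1"
          proof
            assume "nc t = k - 1"
            then have "t = n - 1" using nck t by blast
            then show False using False t uv \<open>u = y\<close> Esym by blast
          qed
          ultimately show ?thesis using cy by simp
        next
          case False
          then show ?thesis using cN[OF vV] cb[OF vV] cy k3 by auto
        qed
      next
        case uy: False
        then have uV': "u \<in> V - {x,y}" using uV uv by auto
        show ?thesis
        proof (cases "v = x")
          case vx: True
          have cx: "c' v = js ! 0" using vx by (simp add: c'_def)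
          show ?thesis
          proof (cases "\<exists>t<n. u \<in> ?R t")
            case True
            then obtain t where t: "t < n" "u \<in> ?R t" by blast
            then show ?thesis using cR ncj0 cx by metis
          next
            case False
            have "c u \<noteq> js ! 0"
            proof
              assume "c u = js ! 0"
              then have "u \<in> ?R 0" using uV' uv vx Esym by auto
              then show False using False n0 by blast
            qed
            then show ?thesis using cN[OF uV' False] cx by simp
          qed
        next
          case vnx: False
          show ?thesis
          proof (cases "v = y")
            case vy: True
            have cy: "c' v = k - 1" using vy xney by (simp add: c'_def)
            show ?thesis
            proof (cases "\<exists>t<n. u \<in> ?R t")
              case True
              then obtain t where t: "t < n" "u \<in> ?R t" by blast
              have "c' u = nc t" using cR t by blast
              moreover have "nc t \<noteq> k - 1"
              proof
                assume "nc t = k - 1"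
                then have "t = n - 1" using nck t by blast
                then show False using \<open>\<not> (\<exists>v\<in>?R (n-1). E v y)\<close> t uv vy by blast
              qed
              ultimately show ?thesis using cy by simp
            next
              case False
              then show ?thesis using cN[OF uV'] cb[OF uV'] cy k3 by auto
            qed
          next
            case vny: False
            then have vV: "v \<in> V - {x,y}" using uV vnx by auto
            have gen: "c' a \<noteq> c' b" if ab: "E a b" "a \<in> V - {x,y}" "b \<in> V - {x,y}" "a \<in> ?R t" "t < n" for a b t
            proof (cases "\<exists>s<n. b \<in> ?R s")
              case True
              then obtain s where s: "s < n" "b \<in> ?R s" by blast
              have "t \<noteq> s" using RR_sub[OF ab(4)] RR_sub[OF s(2)] cp[OF ab(2,3,1)] by auto
              then show ?thesis using cR[OF ab(4,5)] cR[OF s(2,1)] ncd s(1) ab(5) by metis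
            next
              case False
              have "c' a = nc t" using cR ab by blast
              moreover have "c' b = c b" using cN[OF ab(3) False] .
              moreover have "nc t \<noteq> c b"
              proof
                assume e: "nc t = c b"
                have "nc t \<noteq> k - 1" using e cb[OF ab(3)] k3 by auto
                then have st: "Suc t < n" using ncj ab(5) by blast
                then have "b \<in> ?R (Suc t)" using e ncjs ab by auto
                then show False using False st by blast
              qed
              ultimately show ?thesis by simp
            qed
            show ?thesis
            proof (cases "\<exists>t<n. u \<in> ?R t")
              case True
              then show ?thesis using gen uv(1) uV' vV by blast
            next
              case uF: False
              show ?thesis
              proof (cases "\<exists>t<n. v \<in> ?R t")
                case True
                then show ?thesis using gen[of v u] Esym uv(1) uV' vV by metis
              next
                case False
                then show ?thesis using cN[OF uV' uF] cN[OF vV False] cp[OF uV' vV uv(1)] by simp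
              qed
            qed
          qed
        qed
      qed
    qed
    have "proper_colouring E V (k - 1) c'"
      unfolding proper_colouring_def
    proof (intro conjI ballI impI)
      fix v assume v: "v \<in> V"
      show "c' v \<in> {1..k-1}"
      proof (cases "v = x \<or> v = y")
        case True
        then show ?thesis using jsb[OF n0] k3 by (auto simp: c'_def)
      next
        case False
        then have vV: "v \<in> V - {x,y}" using v by auto
        show ?thesis
        proof (cases "\<exists>t<n. v \<in> ?R t")
          case True
          then show ?thesis using cR ncb by metis
        next
          case F: False
          then show ?thesis using cN[OF vV F] cb[OF vV] by auto
        qed
      qed
    next
      fix u v assume "u \<in> V" "v \<in> V" "E u v"
      show "c' u \<noteq> c' v"
      proof -
        have "c' x \<noteq> c' y" using jsb[OF n0] k3 xney by (auto simp: c'_def)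
        then show ?thesis using key[of u v] key[of v u] Esym xney Eirr \<open>E u v\<close> by metis
      qed
    qed
    then have "colourable E V (k - 1)" unfolding colourable_def by blast
    then have "chi E V \<le> k - 1" unfolding chi_def by (rule Least_le)
    then show ?thesis using chi k3 by simp
  qed
qed



lemma colourable_card: "finite S \<Longrightarrow> (\<And>v. \<not> E v v) \<Longrightarrow> colourable E S (card S)"
proof -
  assume "finite S" and irr: "\<And>v. \<not> E v v"
  then obtain h where h: "bij_betw h S {0..<card S}" using ex_bij_betw_finite_nat by blast
  have "proper_colouring E S (card S) (\<lambda>v. Suc (h v))"
    unfolding proper_colouring_def
  proof (intro conjI ballI impI)
    fix v assume "v \<in> S" then show "Suc (h v) \<in> {1..card S}" using h bij_betwE by fastforce
  next
    fix u v assume "u \<in> S" "v \<in> S" "E u v"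
    moreover have "u \<noteq> v" using irr \<open>E u v\<close> by metis
    ultimately show "Suc (h u) \<noteq> Suc (h v)" using h by (auto simp: bij_betw_def inj_on_def)
  qed
  then show ?thesis unfolding colourable_def by blast
qed

lemma colourable_mono: "colourable E S a \<Longrightarrow> a \<le> b \<Longrightarrow> colourable E S b"
  unfolding colourable_def proper_colouring_def by fastforce

lemma colouring_exists:
  assumes "finite S" "\<And>v. \<not> E v v" "chi E S \<le> b"
  shows "\<exists>c. proper_colouring E S b c"
proof -
  have "colourable E S (chi E S)" unfolding chi_def
    using colourable_card[OF assms(1,2)] by (rule LeastI)
  then show ?thesis using colourable_mono assms(3) unfolding colourable_def by blast
qed

lemma cycle_edges_inj:
  assumes lp: "length p = L" and lq: "length q = L" and L3: "L \<ge> 3"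
    and dp: "distinct p" and dq: "distinct q" and h: "p ! 0 = q ! 0" and l: "p ! (L-1) = q ! (L-1)"
    and ce: "cycle_edges p = cycle_edges q"
  shows "p = q"
proof -
  have "\<forall>j\<le>m. p ! j = q ! j" if "m < L" for m
    using that
  proof (induction m)
    case 0 then show ?case using h by simp
  next
    case (Suc m)
    have IH: "\<forall>j\<le>m. p ! j = q ! j" using Suc by simp
    have "p ! Suc m = q ! Suc m"
    proof (cases "Suc m = L - 1")
      case True then show ?thesis using l by simp
    next
      case False
      then have sm: "Suc m < L - 1" using Suc.prems by simp
      have "{p ! m, p ! Suc m} \<in> cycle_edges p"
        unfolding cycle_edges_def using lp sm by (intro CollectI exI[of _ m]) auto
      then have "{p ! m, p ! Suc m} \<in> cycle_edges q" using ce by simp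
      then obtain a where a: "a < L" "{p ! m, p ! Suc m} = {q ! a, q ! (Suc a mod L)}"
        unfolding cycle_edges_def using lq by auto
      have pm: "p ! m = q ! m" using IH by simp
      have qinj: "\<And>i j. i < L \<Longrightarrow> j < L \<Longrightarrow> q ! i = q ! j \<Longrightarrow> i = j"
        using dq lq nth_eq_iff_index_eq by blast
      have pinj: "\<And>i j. i < L \<Longrightarrow> j < L \<Longrightarrow> p ! i = p ! j \<Longrightarrow> i = j"
        using dp lp nth_eq_iff_index_eq by blast
      have modL: "Suc a mod L < L" using L3 by simp
      have smL: "Suc m < L" using sm by arith
      have neq: "p ! m \<noteq> p ! Suc m" using pinj[of m "Suc m"] smL by auto
      from a(2) neq have "(p ! m = q ! a \<and> p ! Suc m = q ! (Suc a mod L)) \<or>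
                          (p ! m = q ! (Suc a mod L) \<and> p ! Suc m = q ! a)"
        by (auto simp: doubleton_eq_iff)
      then show ?thesis
      proof
        assume A: "p ! m = q ! a \<and> p ! Suc m = q ! (Suc a mod L)"
        then have "a = m" using qinj[of m a] pm a(1) smL by auto
        then show ?thesis using A sm by simp
      next
        assume A: "p ! m = q ! (Suc a mod L) \<and> p ! Suc m = q ! a"
        then have am: "Suc a mod L = m" using qinj[of m "Suc a mod L"] pm modL smL by auto
        show ?thesis
        proof (cases "a = L - 1")
          case True
          then have "p ! Suc m = p ! (L - 1)" using A l by simp
          then have "Suc m = L - 1" using pinj[of "Suc m" "L - 1"] smL L3 by auto
          then show ?thesis using sm by simp
        next
          case False
          then have "Suc a = m" using am a(1) by simp
          then have "p ! Suc m = p ! a" using A IH by simp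
          then have "Suc m = a" using pinj[of "Suc m" a] smL a(1) by auto
          then show ?thesis using \<open>Suc a = m\<close> by simp
        qed
      qed
    qed
    then show ?case using IH le_Suc_eq by auto
  qed
  then show ?thesis using lp lq by (intro nth_equalityI) auto
qed


theorem proposition4:
  fixes V :: "'a set" and E :: "'a \<Rightarrow> 'a \<Rightarrow> bool" and k :: nat
  assumes "simple_graph V E"
    and "\<not> complete_graph V E"
    and "double_critical V E"
    and "chi E V = k"
  shows "\<forall>x y. E x y \<longrightarrow>
      (\<forall>c js. proper_colouring E (V - {x, y}) (k - 2) c \<and> js \<noteq> [] \<and> distinct js
              \<and> set js \<subseteq> {1..k - 2} \<longrightarrow>
         (\<exists>p. is_path E p \<and> length p = length js + 2 \<and> hd p = x \<and> last p = y \<and>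
              (\<forall>t<length js. c (p ! Suc t) = js ! t)))
    \<and> (\<forall>i. 1 \<le> i \<and> i \<le> k - 2 \<longrightarrow>
         card {C. is_cycle E (i + 2) C \<and> {x, y} \<in> C} \<ge> fact (k - 2) div fact (k - 2 - i))"
proof -
  have sg: "simple_graph V E" by fact
  have fin: "finite V" and Esym: "\<And>u v. E u v \<Longrightarrow> E v u" and Eirr: "\<And>v. \<not> E v v"
    and EV: "\<And>u v. E u v \<Longrightarrow> u \<in> V \<and> v \<in> V"
    using assms(1) unfolding simple_graph_def by blast+
  show ?thesis
  proof (intro allI impI)
    fix x y assume xy: "E x y"
    have part1: "\<forall>c js. proper_colouring E (V - {x, y}) (k - 2) c \<and> js \<noteq> [] \<and> distinct js
              \<and> set js \<subseteq> {1..k - 2} \<longrightarrow>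
         (\<exists>p. is_path E p \<and> length p = length js + 2 \<and> hd p = x \<and> last p = y \<and>
              (\<forall>t<length js. c (p ! Suc t) = js ! t))"
      using path_exists[OF sg assms(4) xy] by blast
    have "\<forall>i. 1 \<le> i \<and> i \<le> k - 2 \<longrightarrow>
         card {C. is_cycle E (i + 2) C \<and> {x, y} \<in> C} \<ge> fact (k - 2) div fact (k - 2 - i)"
    proof (intro allI impI)
    fix i assume i: "1 \<le> i \<and> i \<le> k - 2"
    have "chi E (V - {x,y}) \<le> k - 2" using assms(3,4) xy unfolding double_critical_def by blast
    then obtain c where c: "proper_colouring E (V - {x, y}) (k - 2) c"
      using colouring_exists[of "V - {x,y}" E] fin Eirr by blast
    define D where "D = {js. length js = i \<and> distinct js \<and> set js \<subseteq> {1..k-2}}"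
    define Cy where "Cy = {C. is_cycle E (i + 2) C \<and> {x, y} \<in> C}"
    define Q where "Q js p \<longleftrightarrow> is_path E p \<and> length p = length js + 2 \<and> hd p = x \<and> last p = y \<and>
              (\<forall>t<length js. c (p ! Suc t) = js ! t)" for js p
    define P where "P js = (SOME p. Q js p)" for js
    have PQ: "Q js (P js)" if "js \<in> D" for js
    proof -
      have "js \<noteq> []" using that i D_def by auto
      then have "\<exists>p. Q js p" using path_exists[OF sg assms(4) xy c] that unfolding D_def Q_def by blast
      then show ?thesis unfolding P_def by (rule someI_ex)
    qed
    define F where "F js = cycle_edges (P js)" for js
    have xney: "x \<noteq> y" using xy Eirr by metis
    have Fin: "F js \<in> Cy" if "js \<in> D" for js
    proof -
      let ?p = "P js"
      have q: "Q js ?p" using PQ that .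
      have lp: "length ?p = i + 2" using q that unfolding Q_def D_def by simp
      have path: "is_path E ?p" using q unfolding Q_def by simp
      have ne: "?p \<noteq> []" using lp by auto
      have h0: "?p ! 0 = x" using q hd_conv_nth[OF ne] unfolding Q_def by simp
      have "last ?p = y" using q unfolding Q_def by simp
      then have hl: "?p ! (i+1) = y" using lp last_conv_nth[OF ne] by simp
      have "is_cycle E (i + 2) (F js)"
        unfolding is_cycle_def F_def
      proof (intro exI[of _ ?p] conjI allI impI)
        show "length ?p = i + 2" by fact
        show "3 \<le> i + 2" using i by simp
        show "distinct ?p" using path unfolding is_path_def by simp
        fix j assume j: "j < i + 2"
        show "E (?p ! j) (?p ! (Suc j mod (i + 2)))"
        proof (cases "Suc j < i + 2")
          case True then show ?thesis using path lp unfolding is_path_def by simp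
        next
          case False
          then have "j = i + 1" using j by simp
          then show ?thesis using h0 hl xy Esym by simp
        qed
      qed simp
      moreover have "{x, y} \<in> F js"
        unfolding F_def cycle_edges_def using lp h0 hl
        by (intro CollectI exI[of _ "i+1"]) auto
      ultimately show ?thesis unfolding Cy_def by simp
    qed
    have Finj: "inj_on F D"
    proof (rule inj_onI)
      fix a b assume a: "a \<in> D" and b: "b \<in> D" and e: "F a = F b"
      have qa: "Q a (P a)" and qb: "Q b (P b)" using PQ a b by auto
      have la: "length (P a) = i + 2" and lb: "length (P b) = i + 2"
        using qa qb a b unfolding Q_def D_def by auto
      have "P a = P b"
      proof (rule cycle_edges_inj[of _ "i+2"])
        show "length (P a) = i + 2" "length (P b) = i + 2" by fact+
        show "3 \<le> i + 2" using i by simp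
        show "distinct (P a)" "distinct (P b)" using qa qb unfolding Q_def is_path_def by auto
        have nea: "P a \<noteq> []" and neb: "P b \<noteq> []" using la lb by auto
        show "P a ! 0 = P b ! 0" using qa qb hd_conv_nth[OF nea] hd_conv_nth[OF neb] unfolding Q_def by simp
        have "last (P a) = y" "last (P b) = y" using qa qb unfolding Q_def by simp_all
        then show "P a ! (i + 2 - 1) = P b ! (i + 2 - 1)" using la lb last_conv_nth[OF nea] last_conv_nth[OF neb]
          by simp
        show "cycle_edges (P a) = cycle_edges (P b)" using e unfolding F_def .
      qed
      moreover have "length a = i" "length b = i" using a b unfolding D_def by auto
      ultimately show "a = b" using qa qb unfolding Q_def
        by (metis nth_equalityI)
    qed
    have finCy: "finite Cy"
    proof (rule finite_subset)
      show "Cy \<subseteq> Pow (Pow V)"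
      proof
        fix C assume "C \<in> Cy"
        then obtain vs where vs: "length vs = i + 2" "\<forall>j<i + 2. E (vs ! j) (vs ! (Suc j mod (i + 2)))"
            "C = cycle_edges vs" unfolding Cy_def is_cycle_def by blast
        show "C \<in> Pow (Pow V)"
          unfolding vs(3) cycle_edges_def using vs(1,2) EV by fastforce
      qed
      show "finite (Pow (Pow V))" using fin by simp
    qed
    have "card D \<le> card Cy"
      using card_inj_on_le[OF Finj _ finCy] Fin by blast
    moreover have "card D = fact (k - 2) div fact (k - 2 - i)"
    proof -
      have "card D = \<Prod>{card {1..k-2} - i + 1 .. card {1..k-2}}"
        unfolding D_def using i by (intro card_lists_distinct_length_eq) auto
      also have "\<dots> = \<Prod>{k - 2 - i + 1 .. k - 2}" by simp
      also have "\<dots> = fact (k - 2) div fact (k - 2 - i)" using i by (simp add: fact_div_fact)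
      finally show ?thesis .
    qed
    ultimately show "card {C. is_cycle E (i + 2) C \<and> {x, y} \<in> C} \<ge> fact (k - 2) div fact (k - 2 - i)"
      unfolding Cy_def by simp
    qed
    then show "(\<forall>c js. proper_colouring E (V - {x, y}) (k - 2) c \<and> js \<noteq> [] \<and> distinct js
              \<and> set js \<subseteq> {1..k - 2} \<longrightarrow>
         (\<exists>p. is_path E p \<and> length p = length js + 2 \<and> hd p = x \<and> last p = y \<and>
              (\<forall>t<length js. c (p ! Suc t) = js ! t)))
    \<and> (\<forall>i. 1 \<le> i \<and> i \<le> k - 2 \<longrightarrow>
         card {C. is_cycle E (i + 2) C \<and> {x, y} \<in> C} \<ge> fact (k - 2) div fact (k - 2 - i))" using part1 by blast
  qed
qed

end
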